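(* Let $\mathcal{A}$ be a finite abelian group with $|\mathcal{A}|\ge 3$. Let $M_5(p_1,p_2)$ be the graph consisting of the $5$-cycle $v_1v_2v_3v_4v_5v_1$ with the chord $v_3v_5$, together with $p_1\ge 0$ pendant vertices adjacent to $v_1$ and $p_2\ge0$ pendant vertices adjacent to $v_2$, where $(p_1,p_2)\neq(0,0)$. Then $M_5(p_1,p_2)$ is $\mathcal{A}$-vertex magic if and only if $p_1\ge1$, $p_2\ge 1$, and $\mathcal{A}$ contains a square element.
   Context: An element $g\in\mathcal{A}$ is a square if $g\neq 0$ and $g=2h$ for some $h\in\mathcal{A}$. A map $\ell:V(G)\to\mathcal{A}\setminus\{0\}$ is an $\mathcal{A}$-vertex magic labeling if there is $\mu\in\mathcal{A}$ with $\sum_{u\in N(v)}\ell(u)=\mu$ for every vertex $v$; $G$ is $\mathcal{A}$-vertex magic if such a labeling exists. A pendant vertex has degree $1$. *)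

theory Defs
  imports Main
begin

definition nbhd :: "'v set \<Rightarrow> ('v \<Rightarrow> 'v \<Rightarrow> bool) \<Rightarrow> 'v \<Rightarrow> 'v set" where
  "nbhd V adj v = {u \<in> V. adj v u}"

definition vertex_magic_labeling ::
  "'v set \<Rightarrow> ('v \<Rightarrow> 'v \<Rightarrow> bool) \<Rightarrow> ('v \<Rightarrow> 'a::comm_monoid_add) \<Rightarrow> bool" where
  "vertex_magic_labeling V adj l \<longleftrightarrow>
     (\<forall>v\<in>V. l v \<noteq> 0) \<and> (\<exists>\<mu>. \<forall>v\<in>V. (\<Sum>u\<in>nbhd V adj v. l u) = \<mu>)"

definition vertex_magic ::
  "'a::comm_monoid_add itself \<Rightarrow> 'v set \<Rightarrow> ('v \<Rightarrow> 'v \<Rightarrow> bool) \<Rightarrow> bool" where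
  "vertex_magic TYPE('a) V adj \<longleftrightarrow> (\<exists>l :: 'v \<Rightarrow> 'a. vertex_magic_labeling V adj l)"

definition is_square :: "'a::ab_group_add \<Rightarrow> bool" where
  "is_square g \<longleftrightarrow> g \<noteq> 0 \<and> (\<exists>h. g = h + h)"

datatype m5v = Cyc nat | Pend1 nat | Pend2 nat

definition M5_verts :: "nat \<Rightarrow> nat \<Rightarrow> m5v set" where
  "M5_verts p1 p2 = Cyc ` {1..5} \<union> Pend1 ` {..<p1} \<union> Pend2 ` {..<p2}"

fun M5_edge0 :: "m5v \<Rightarrow> m5v \<Rightarrow> bool" where
  "M5_edge0 (Cyc i) (Cyc j) \<longleftrightarrow>
     (i, j) \<in> {(1,2), (2,3), (3,4), (4,5), (5,1), (3,5)}"
| "M5_edge0 (Pend1 _) (Cyc j) \<longleftrightarrow> j = 1"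
| "M5_edge0 (Pend2 _) (Cyc j) \<longleftrightarrow> j = 2"
| "M5_edge0 _ _ \<longleftrightarrow> False"

definition M5_adj :: "m5v \<Rightarrow> m5v \<Rightarrow> bool" where
  "M5_adj u v \<longleftrightarrow> M5_edge0 u v \<or> M5_edge0 v u"

end

theory Submission
  imports Defs
begin

lemma nz_sum_exists:
  assumes "card (UNIV :: ('a::{ab_group_add, finite}) set) \<ge> 3"
  shows "k \<ge> 1 \<Longrightarrow> (c::'a) \<noteq> 0 \<Longrightarrow> \<exists>f::nat\<Rightarrow>'a. (\<forall>i. f i \<noteq> 0) \<and> sum f {..<k} = c"
proof (induction k arbitrary: c)
  case 0 then show ?case by simp
next
  case (Suc m)
  show ?case
  proof (cases "m = 0")
    case True
    then show ?thesis using Suc.prems by (intro exI[of _ "\<lambda>_. c"]) auto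
  next
    case False
    have "\<not> (UNIV :: 'a set) \<subseteq> {0, c}"
    proof
      assume "(UNIV :: 'a set) \<subseteq> {0, c}"
      then have "card (UNIV :: 'a set) \<le> card {0, c}" by (intro card_mono) auto
      also have "\<dots> \<le> 2" by (simp add: card_insert_if)
      finally show False using assms by simp
    qed
    then obtain x :: 'a where x: "x \<noteq> 0" "x \<noteq> c" by auto
    then have "c - x \<noteq> 0" by simp
    with Suc.IH[of "c - x"] False obtain f where f: "\<forall>i. f i \<noteq> 0" "sum f {..<m} = c - x" by auto
    show ?thesis
      by (intro exI[of _ "f(m := x)"]) (use f x in auto)
  qed
qed

abbreviation "VV p1 p2 \<equiv> M5_verts p1 p2"

lemma inV: "Cyc i \<in> VV p1 p2 \<longleftrightarrow> i \<in> {1..5}" "Pend1 i \<in> VV p1 p2 \<longleftrightarrow> i < p1"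
  "Pend2 i \<in> VV p1 p2 \<longleftrightarrow> i < p2"
  by (auto simp: M5_verts_def)

lemma nb1: "nbhd (VV p1 p2) M5_adj (Cyc 1) = insert (Cyc 2) (insert (Cyc 5) (Pend1 ` {..<p1}))"
  unfolding nbhd_def by (auto simp: M5_verts_def M5_adj_def elim: M5_edge0.elims)
lemma nb2: "nbhd (VV p1 p2) M5_adj (Cyc 2) = insert (Cyc 1) (insert (Cyc 3) (Pend2 ` {..<p2}))"
  unfolding nbhd_def by (auto simp: M5_verts_def M5_adj_def elim: M5_edge0.elims)
lemma nb3: "nbhd (VV p1 p2) M5_adj (Cyc 3) = {Cyc 2, Cyc 4, Cyc 5}"
  unfolding nbhd_def by (auto simp: M5_verts_def M5_adj_def elim: M5_edge0.elims)
lemma nb4: "nbhd (VV p1 p2) M5_adj (Cyc 4) = {Cyc 3, Cyc 5}"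
  unfolding nbhd_def by (auto simp: M5_verts_def M5_adj_def elim: M5_edge0.elims)
lemma nb5: "nbhd (VV p1 p2) M5_adj (Cyc 5) = {Cyc 1, Cyc 3, Cyc 4}"
  unfolding nbhd_def by (auto simp: M5_verts_def M5_adj_def elim: M5_edge0.elims)
lemma nbP1: "nbhd (VV p1 p2) M5_adj (Pend1 i) = {Cyc 1}"
  unfolding nbhd_def by (auto simp: M5_verts_def M5_adj_def elim: M5_edge0.elims)
lemma nbP2: "nbhd (VV p1 p2) M5_adj (Pend2 i) = {Cyc 2}"
  unfolding nbhd_def by (auto simp: M5_verts_def M5_adj_def elim: M5_edge0.elims)

lemma sumP1: "sum l (Pend1 ` A) = sum (\<lambda>i. l (Pend1 i)) A"
  by (subst sum.reindex) (auto simp: inj_on_def)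
lemma sumP2: "sum l (Pend2 ` A) = sum (\<lambda>i. l (Pend2 i)) A"
  by (subst sum.reindex) (auto simp: inj_on_def)

theorem proposition4p5:
  fixes p1 p2 :: nat
  assumes "card (UNIV :: ('a::{ab_group_add, finite}) set) \<ge> 3"
    and "(p1, p2) \<noteq> (0, 0)"
  shows "vertex_magic TYPE('a) (M5_verts p1 p2) M5_adj \<longleftrightarrow>
           p1 \<ge> 1 \<and> p2 \<ge> 1 \<and> (\<exists>g::'a. is_square g)"
proof
  assume "vertex_magic TYPE('a) (M5_verts p1 p2) M5_adj"
  then obtain l :: "m5v \<Rightarrow> 'a" and \<mu> where nz: "\<forall>v\<in>VV p1 p2. l v \<noteq> 0"
    and mg: "\<forall>v\<in>VV p1 p2. (\<Sum>u\<in>nbhd (VV p1 p2) M5_adj v. l u) = \<mu>"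
    unfolding vertex_magic_def vertex_magic_labeling_def by blast
  have "(\<Sum>u\<in>nbhd (VV p1 p2) M5_adj (Cyc 1). l u) = l (Cyc 2) + l (Cyc 5) + (\<Sum>i<p1. l (Pend1 i))"
    unfolding nb1 by (simp add: sumP1 add.assoc image_iff)
  then have e1: "l (Cyc 2) + l (Cyc 5) + (\<Sum>i<p1. l (Pend1 i)) = \<mu>"
    using mg[rule_format, of "Cyc _"] by (simp add: inV)
  have "(\<Sum>u\<in>nbhd (VV p1 p2) M5_adj (Cyc 2). l u) = l (Cyc 1) + l (Cyc 3) + (\<Sum>i<p2. l (Pend2 i))"
    unfolding nb2 by (simp add: sumP2 add.assoc image_iff)
  then have e2: "l (Cyc 1) + l (Cyc 3) + (\<Sum>i<p2. l (Pend2 i)) = \<mu>"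
    using mg[rule_format, of "Cyc _"] by (simp add: inV)
  have "(\<Sum>u\<in>nbhd (VV p1 p2) M5_adj (Cyc 3). l u) = l (Cyc 2) + l (Cyc 4) + l (Cyc 5)"
    unfolding nb3 by (simp add: add.assoc)
  then have e3: "l (Cyc 2) + l (Cyc 4) + l (Cyc 5) = \<mu>"
    using mg[rule_format, of "Cyc _"] by (simp add: inV)
  have "(\<Sum>u\<in>nbhd (VV p1 p2) M5_adj (Cyc 4). l u) = l (Cyc 3) + l (Cyc 5)"
    unfolding nb4 by (simp add: add.assoc)
  then have e4: "l (Cyc 3) + l (Cyc 5) = \<mu>"
    using mg[rule_format, of "Cyc _"] by (simp add: inV)
  have "(\<Sum>u\<in>nbhd (VV p1 p2) M5_adj (Cyc 5). l u) = l (Cyc 1) + l (Cyc 3) + l (Cyc 4)"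
    unfolding nb5 by (simp add: add.assoc)
  then have e5: "l (Cyc 1) + l (Cyc 3) + l (Cyc 4) = \<mu>"
    using mg[rule_format, of "Cyc _"] by (simp add: inV)
  have n: "l (Cyc i) \<noteq> 0" if "i \<in> {1..5}" for i using nz that by (simp add: inV)
  have q1: "l (Cyc 1) = \<mu>" if "p1 \<ge> 1"
    using mg[rule_format, of "Pend1 0"] that by (simp add: inV nbP1)
  have q2: "l (Cyc 2) = \<mu>" if "p2 \<ge> 1"
    using mg[rule_format, of "Pend2 0"] that by (simp add: inV nbP2)
  have p1: "p1 \<ge> 1"
  proof (rule ccontr)
    assume "\<not> p1 \<ge> 1"
    then have "p1 = 0" "p2 \<ge> 1" using assms(2) by auto
    then have "l (Cyc 5) = 0" using e1 q2 by simp
    then show False using n[of 5] by simp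
  qed
  have p2: "p2 \<ge> 1"
  proof (rule ccontr)
    assume "\<not> p2 \<ge> 1"
    then have "p2 = 0" by auto
    then have "l (Cyc 3) = 0" using e2 q1[OF p1] by simp
    then show False using n[of 3] by simp
  qed
  have "l (Cyc 3) + l (Cyc 4) = 0" using e5 q1[OF p1] by (simp add: add.assoc)
  then have a4: "l (Cyc 4) = - l (Cyc 3)" by (metis add.commute eq_neg_iff_add_eq_0)
  have "l (Cyc 4) + l (Cyc 5) = 0" using e3 q2[OF p2] by (simp add: add.assoc)
  then have a5: "l (Cyc 5) = l (Cyc 3)" using a4 by (metis add.commute eq_neg_iff_add_eq_0 minus_minus)
  have "\<mu> = l (Cyc 3) + l (Cyc 3)" using e4 a5 by simp
  moreover have "\<mu> \<noteq> 0" using q1[OF p1] n[of 1] by simp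
  ultimately have "is_square \<mu>" unfolding is_square_def by blast
  then show "p1 \<ge> 1 \<and> p2 \<ge> 1 \<and> (\<exists>g::'a. is_square g)" using p1 p2 by blast
next
  assume "p1 \<ge> 1 \<and> p2 \<ge> 1 \<and> (\<exists>g::'a. is_square g)"
  then obtain g h :: 'a where p: "p1 \<ge> 1" "p2 \<ge> 1" and g: "g \<noteq> 0" "g = h + h"
    unfolding is_square_def by blast
  have h: "h \<noteq> 0" using g by auto
  then have "- h \<noteq> 0" by simp
  from nz_sum_exists[OF assms(1) p(1) this] obtain f1 where
    f1: "\<forall>i. f1 i \<noteq> 0" "sum f1 {..<p1} = - h" by blast
  from nz_sum_exists[OF assms(1) p(2) \<open>- h \<noteq> 0\<close>] obtain f2 where
    f2: "\<forall>i. f2 i \<noteq> 0" "sum f2 {..<p2} = - h" by blast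
  define l :: "m5v \<Rightarrow> 'a" where "l v = (case v of Cyc i \<Rightarrow>
      (if i = 1 \<or> i = 2 then g else if i = 4 then - h else h)
     | Pend1 i \<Rightarrow> f1 i | Pend2 i \<Rightarrow> f2 i)" for v
  have "vertex_magic_labeling (VV p1 p2) M5_adj l"
    unfolding vertex_magic_labeling_def
  proof (intro conjI exI ballI)
    fix v assume "v \<in> VV p1 p2"
    then show "l v \<noteq> 0" using f1 f2 g h by (cases v) (auto simp: l_def inV)
  next
    fix v assume v: "v \<in> VV p1 p2"
    show "(\<Sum>u\<in>nbhd (VV p1 p2) M5_adj v. l u) = g"
    proof (cases v)
      case (Cyc i)
      then have "i = 1 \<or> i = 2 \<or> i = 3 \<or> i = 4 \<or> i = 5" using v by (auto simp: inV)
      moreover have "(\<Sum>u\<in>nbhd (VV p1 p2) M5_adj (Cyc 1). l u) = g"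
        unfolding nb1 using f1 by (simp add: sumP1 image_iff l_def g)
      moreover have "(\<Sum>u\<in>nbhd (VV p1 p2) M5_adj (Cyc 2). l u) = g"
        unfolding nb2 using f2 by (simp add: sumP2 image_iff l_def g)
      moreover have "(\<Sum>u\<in>nbhd (VV p1 p2) M5_adj (Cyc 3). l u) = g"
        unfolding nb3 by (simp add: l_def g)
      moreover have "(\<Sum>u\<in>nbhd (VV p1 p2) M5_adj (Cyc 4). l u) = g"
        unfolding nb4 by (simp add: l_def g)
      moreover have "(\<Sum>u\<in>nbhd (VV p1 p2) M5_adj (Cyc 5). l u) = g"
        unfolding nb5 by (simp add: l_def g)
      ultimately show ?thesis using Cyc by auto
    next
      case (Pend1 i) then show ?thesis by (simp add: nbP1 l_def)
    next
      case (Pend2 i) then show ?thesis by (simp add: nbP2 l_def)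
    qed
  qed
  then show "vertex_magic TYPE('a) (M5_verts p1 p2) M5_adj"
    unfolding vertex_magic_def by blast
qed

end
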